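(* Let $G_{l_1+l_2}$ be the two-layer stochastic block model $G(n,n_1,n_2,p_1,p_2)$ satisfying the standing assumptions below, and let $e_{22}$ and $e_{2out}$ be the expected numbers of internal and outgoing edges of a community of the ground-truth layer $l_2$. If $3e_{22}>e_{2out}$, then for every partition $l'_2$ close to $l_2$, the (expected) modularity of $l_2$ in $G_{l_1+l_2}$ is strictly larger than that of $l'_2$, i.e. $Q_{l_2}>Q_{l'_2}$.
   Context: Multi-layer stochastic block model $G(n,n_1,\dots,n_L,p_1,\dots,p_L)$: a random graph on $n$ nodes with $L$ layers. For each layer $l$ the nodes are partitioned into $n_l$ planted communities of size $s_l=n/n_l$; independently for each layer, each pair of distinct nodes in a common community of layer $l$ receives an edge from layer $l$ with probability $p_l$; the graph is the simple union of all generated edges. The partitions of different layers are independent: for any $k\ge 2$ distinct layers and any choice of one community from each, their intersection has $n/(n_{l_1}\cdots n_{l_k})$ nodes (in expectation). Standing assumptions: $n_l\ge 4$, $p_l\in[0.05,1]$ for every layer, and $n\ge 2\prod_l n_l$. Modularity: for a partition of the nodes of a graph with $e$ edges, if community $i$ has $e^i_{in}$ internal edges, $e^i_{out}$ edges with exactly one endpoint in it, and total degree $d^i=2e^i_{in}+e^i_{out}$, the modularity is $Q=\sum_i\big(\frac{e^i_{in}}{e}-(\frac{d^i}{2e})^2\big)$; here all edge counts are replaced by their expected values in the model. Close partitions: a partition $l'$ is close to a partition $l$ if $l'$ is obtained from $l$ by one of: (1) moving one node from its community to another community; (2) exchanging the community memberships of two nodes; (3) separating one node from its community to form a new singleton community.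 *)

theory Defs
  imports Complex_Main "HOL-Library.Disjoint_Sets"
begin

definition same_comm :: "'a set set \<Rightarrow> 'a \<Rightarrow> 'a \<Rightarrow> bool" where
  "same_comm P u v \<longleftrightarrow> (\<exists>A\<in>P. u \<in> A \<and> v \<in> A)"

text \<open>Probability that the pair {u,v} is an edge of the two-layer model (simple union of
  the independently generated layer edges).\<close>
definition edge_prob2 ::
  "'a set set \<Rightarrow> real \<Rightarrow> 'a set set \<Rightarrow> real \<Rightarrow> 'a \<Rightarrow> 'a \<Rightarrow> real" where
  "edge_prob2 P1 p1 P2 p2 u v =
     (if u = v then 0
      else 1 - (1 - (if same_comm P1 u v then p1 else 0)) * (1 - (if same_comm P2 u v then p2 else 0)))"

definition exp_edges :: "('a \<Rightarrow> 'a \<Rightarrow> real) \<Rightarrow> 'a set \<Rightarrow> real" where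
  "exp_edges w V = (\<Sum>u\<in>V. \<Sum>v\<in>V. w u v) / 2"

definition exp_in :: "('a \<Rightarrow> 'a \<Rightarrow> real) \<Rightarrow> 'a set \<Rightarrow> real" where
  "exp_in w C = (\<Sum>u\<in>C. \<Sum>v\<in>C. w u v) / 2"

definition exp_out :: "('a \<Rightarrow> 'a \<Rightarrow> real) \<Rightarrow> 'a set \<Rightarrow> 'a set \<Rightarrow> real" where
  "exp_out w V C = (\<Sum>u\<in>C. \<Sum>v\<in>V - C. w u v)"

definition exp_deg :: "('a \<Rightarrow> 'a \<Rightarrow> real) \<Rightarrow> 'a set \<Rightarrow> 'a set \<Rightarrow> real" where
  "exp_deg w V C = 2 * exp_in w C + exp_out w V C"

definition modularity :: "('a \<Rightarrow> 'a \<Rightarrow> real) \<Rightarrow> 'a set \<Rightarrow> 'a set set \<Rightarrow> real" where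
  "modularity w V P =
     (\<Sum>C\<in>P. exp_in w C / exp_edges w V - (exp_deg w V C / (2 * exp_edges w V))^2)"

definition close_partition :: "'a set set \<Rightarrow> 'a set set \<Rightarrow> bool" where
  "close_partition P P' \<longleftrightarrow>
     (\<exists>A\<in>P. \<exists>B\<in>P. \<exists>x\<in>A. A \<noteq> B \<and>
        P' = ((P - {A, B}) \<union> {A - {x}, insert x B}) - {{}})
   \<or> (\<exists>A\<in>P. \<exists>B\<in>P. \<exists>x\<in>A. \<exists>y\<in>B. A \<noteq> B \<and>
        P' = (P - {A, B}) \<union> {insert y (A - {x}), insert x (B - {y})})
   \<or> (\<exists>A\<in>P. \<exists>x\<in>A. P' = ((P - {A}) \<union> {A - {x}, {x}}) - {{}})"

end

theory Submission imports Defs begin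

lemma part_uniq:
  assumes "partition_on V P" "C \<in> P" "D \<in> P" "z \<in> C" "z \<in> D"
  shows "C = D"
  using assms disjointD[OF partition_onD2[OF assms(1)]] by blast

lemma same_comm_iff:
  assumes "partition_on V P" "X \<in> P" "x \<in> X"
  shows "same_comm P x v \<longleftrightarrow> v \<in> X"
  using assms part_uniq[OF assms(1)] unfolding same_comm_def by blast

lemma I_insert:
  fixes w :: "'a \<Rightarrow> 'a \<Rightarrow> real"
  assumes "finite S" "x \<notin> S" "w x x = 0" "\<And>u v. w u v = w v u"
  shows "(\<Sum>u\<in>insert x S. \<Sum>v\<in>insert x S. w u v) = (\<Sum>u\<in>S. \<Sum>v\<in>S. w u v) + 2 * (\<Sum>v\<in>S. w x v)"
proof -
  have "(\<Sum>u\<in>insert x S. \<Sum>v\<in>insert x S. w u v) = (\<Sum>u\<in>insert x S. w u x + (\<Sum>v\<in>S. w u v))"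
    using assms(1,2) by simp
  also have "\<dots> = (w x x + (\<Sum>v\<in>S. w x v)) + (\<Sum>u\<in>S. w u x + (\<Sum>v\<in>S. w u v))"
    using assms(1,2) by simp
  also have "\<dots> = (\<Sum>u\<in>S. \<Sum>v\<in>S. w u v) + 2 * (\<Sum>v\<in>S. w x v)"
  proof -
    have "(\<Sum>u\<in>S. w u x) = (\<Sum>u\<in>S. w x u)" using assms(4) by (intro sum.cong) auto
    then show ?thesis using assms(3) by (simp add: sum.distrib)
  qed
  finally show ?thesis .
qed

lemma exp_deg_eq:
  fixes w :: "'a \<Rightarrow> 'a \<Rightarrow> real"
  fixes D :: real
  assumes "finite V" "C \<subseteq> V" "\<And>u. u \<in> V \<Longrightarrow> (\<Sum>v\<in>V. w u v) = D"
  shows "exp_deg w V C = card C * D"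
proof -
  have "exp_deg w V C = (\<Sum>u\<in>C. (\<Sum>v\<in>C. w u v) + (\<Sum>v\<in>V-C. w u v))"
    unfolding exp_deg_def exp_in_def exp_out_def by (simp add: sum.distrib)
  also have "\<dots> = (\<Sum>u\<in>C. (\<Sum>v\<in>V. w u v))"
  proof (rule sum.cong)
    fix u show "sum (w u) C + sum (w u) (V - C) = sum (w u) V"
      using sum.subset_diff[OF assms(2,1), of "w u"] by linarith
  qed simp
  also have "\<dots> = (\<Sum>u\<in>C. D)"
    by (rule sum.cong) (use assms in auto)
  finally show ?thesis by simp
qed

lemma exp_edges_eq:
  fixes w :: "'a \<Rightarrow> 'a \<Rightarrow> real"
  fixes D :: real
  assumes "\<And>u. u \<in> V \<Longrightarrow> (\<Sum>v\<in>V. w u v) = D"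
  shows "exp_edges w V = card V * D / 2"
  unfolding exp_edges_def using sum.cong[OF refl assms, of V] by simp

lemma sum_ind:
  fixes c :: real
  assumes "finite A"
  shows "(\<Sum>v\<in>A. if v \<in> X then c else 0) = real (card (A \<inter> X)) * c"
proof -
  have "(\<Sum>v\<in>A. if v \<in> X then c else 0) = sum (\<lambda>_. c) {v\<in>A. v \<in> X}"
    using sum.inter_filter[OF assms, of "\<lambda>_. c" "\<lambda>v. v \<in> X"] by simp
  also have "{v\<in>A. v \<in> X} = A \<inter> X" by blast
  finally show ?thesis by simp
qed

lemma arith1:
  fixes a b s k E :: real
  assumes "E > 0" "a > b"
  shows "((s*a-2*a)/2)/E - ((s-1)*k)^2 + ((s*a+2*b)/2)/E - ((s+1)*k)^2 < ((s*a)/2)/E - (s*k)^2 + ((s*a)/2)/E - (s*k)^2"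
proof -
  have "((s*a-2*a)/2)/E - ((s-1)*k)^2 + ((s*a+2*b)/2)/E - ((s+1)*k)^2 = (((s*a)/2)/E - (s*k)^2 + ((s*a)/2)/E - (s*k)^2) + (b-a)/E - 2*k^2"
    using assms(1) by (simp add: field_simps power2_eq_square)
  moreover have "(b-a)/E < 0" using assms by (simp add: divide_neg_pos)
  moreover have "k^2 \<ge> 0" by simp
  ultimately show ?thesis by linarith
qed
lemma arith2:
  fixes a b s k E c :: real
  assumes "E > 0" "a > b" "c \<ge> 0" "c' \<ge> 0"
  shows "((s*a-2*a+2*b-2*c)/2)/E - (s*k)^2 + ((s*a-2*a+2*b-2*c')/2)/E - (s*k)^2 < (s*a/2)/E - (s*k)^2 + (s*a/2)/E - (s*k)^2"
proof -
  have "((s*a-2*a+2*b-2*c)/2)/E - (s*k)^2 + ((s*a-2*a+2*b-2*c')/2)/E - (s*k)^2 = ((s*a/2)/E - (s*k)^2 + (s*a/2)/E - (s*k)^2) + (2*(b-a) - c - c')/E"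
    using assms(1) by (simp add: field_simps power2_eq_square)
  moreover have "(2*(b-a) - c - c')/E < 0" using assms by (simp add: divide_neg_pos)
  ultimately show ?thesis by simp
qed
lemma arith3:
  fixes a s D E N :: real
  assumes "D > 0" "5*a > 2*D" "N \<ge> 4*s" "s \<ge> 1" "E = N*D/2"
  shows "((s*a-2*a)/2)/E - ((s-1)*(D/(2*E)))^2 + (0/2)/E - (1*(D/(2*E)))^2 < (s*a/2)/E - (s*(D/(2*E)))^2"
proof -
  have N: "N > 0" using assms by linarith
  have k: "D/(2*E) = 1/N" using assms(1,5) N by (simp add: field_simps)
  have "((s*a-2*a)/2)/E - ((s-1)*(D/(2*E)))^2 + (0/2)/E - (1*(D/(2*E)))^2 = (s*a/2)/E - (s*(D/(2*E)))^2 + ((2*s-2)*D - 2*a*N)/(N^2*D)"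
    unfolding k using assms(1,5) N by (simp add: field_simps power2_eq_square)
  note eq = this
  have "a > 0" using assms by linarith
  then have f1: "a * N \<ge> 4*(s*a)" using assms mult_left_mono[of "4*s" N a] by (simp add: algebra_simps)
  have f2: "s*(2*D) < s*(5*a)" using assms by (intro mult_strict_left_mono) auto
  have f3: "s*D > 0" using assms by simp
  have "(2*s-2)*D - 2*a*N = 2*(s*D) - 2*D - 2*(a*N)" by (simp add: algebra_simps)
  moreover have "2*(s*D) - 2*D - 2*(a*N) < 0" using f1 f2 f3 assms(1) by (simp add: algebra_simps)
  ultimately have "(2*s-2)*D - 2*a*N < 0" by simp
  then have "((2*s-2)*D - 2*a*N)/(N^2*D) < 0" using assms N by (simp add: divide_neg_pos)
  then show ?thesis using eq by simp
qed

theorem theorem10: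
  fixes V :: "'a set" and P1 P2 P' :: "'a set set" and n n1 n2 :: nat and p1 p2 :: real
  assumes "finite V" and "card V = n"
    and "partition_on V P1" and "partition_on V P2"
    and "card P1 = n1" and "card P2 = n2"
    and "\<forall>A\<in>P1. card A * n1 = n" and "\<forall>B\<in>P2. card B * n2 = n"
    and "\<forall>A\<in>P1. \<forall>B\<in>P2. card (A \<inter> B) * (n1 * n2) = n"
    and "n1 \<ge> 4" and "n2 \<ge> 4"
    and "0.05 \<le> p1" and "p1 \<le> 1" and "0.05 \<le> p2" and "p2 \<le> 1"
    and "n \<ge> 2 * n1 * n2"
    and "\<forall>B\<in>P2. 3 * exp_in (edge_prob2 P1 p1 P2 p2) B > exp_out (edge_prob2 P1 p1 P2 p2) V B"
    and "close_partition P2 P'"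
  shows "modularity (edge_prob2 P1 p1 P2 p2) V P2 > modularity (edge_prob2 P1 p1 P2 p2) V P'"
proof -
  define w where "w = edge_prob2 P1 p1 P2 p2"
  define q where "q = p1 + p2 - p1 * p2"
  define t :: real where "t = real n / (real n1 * real n2)"
  define s :: real where "s = real n / real n2"
  define a where "a = (t - 1) * q + (s - t) * p2"
  define b where "b = t * p1"
  define D where "D = a + (real n2 - 1) * b"
  have n1pos: "real n1 > 0" and n2pos: "real n2 > 0" using assms(10,11) by auto
  have cardA: "real (card A) = s" if "A \<in> P2" for A
    using assms(8) that n2pos unfolding s_def
    by (metis nonzero_mult_div_cancel_right of_nat_0_less_iff of_nat_mult order_less_irrefl)
  have cardAX: "real (card (A \<inter> X)) = t" if "A \<in> P2" "X \<in> P1" for A X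
  proof -
    have "card (X \<inter> A) * (n1 * n2) = n" using assms(9) that by blast
    then have "real (card (X \<inter> A)) * (real n1 * real n2) = real n" by (metis of_nat_mult)
    then show ?thesis unfolding t_def using n1pos n2pos by (simp add: Int_commute field_simps)
  qed
  have wsym: "w u v = w v u" for u v
    unfolding w_def edge_prob2_def same_comm_def by (auto simp: algebra_simps)
  have wxx: "w x x = 0" for x unfolding w_def edge_prob2_def by simp
  have finP2: "finite A" if "A \<in> P2" for A
    using that assms(1) partition_onD1[OF assms(4)] by (meson Union_upper finite_subset)
  have subP2: "A \<subseteq> V" if "A \<in> P2" for A
    using that partition_onD1[OF assms(4)] by blast
  have inP1: "\<exists>X\<in>P1. x \<in> X" if "x \<in> V" for x
    using that partition_onD1[OF assms(3)] by blast
  have inP2: "\<exists>A\<in>P2. x \<in> A" if "x \<in> V" for x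
    using that partition_onD1[OF assms(4)] by blast
  have Wa: "(\<Sum>v\<in>A. w x v) = a" if hA: "A \<in> P2" "x \<in> A" for x A
  proof -
    obtain X where X: "X \<in> P1" "x \<in> X" using inP1 subP2 hA by blast
    have "w x v = p2 + (if v \<in> X then q - p2 else 0) - (if v = x then q else 0)" if "v \<in> A" for v
    proof -
      have "same_comm P2 x v" using \<open>v \<in> A\<close> \<open>x \<in> A\<close> \<open>A \<in> P2\<close> unfolding same_comm_def by blast
      moreover have "same_comm P1 x v \<longleftrightarrow> v \<in> X" using same_comm_iff[OF assms(3) X] .
      ultimately show ?thesis unfolding w_def edge_prob2_def q_def using X by (auto simp: algebra_simps)
    qed
    then have "(\<Sum>v\<in>A. w x v) = (\<Sum>v\<in>A. p2 + (if v \<in> X then q - p2 else 0) - (if v = x then q else 0))"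
      by (intro sum.cong) auto
    also have "\<dots> = real (card A) * p2 + real (card (A \<inter> X)) * (q - p2) - q"
      using finP2[OF hA(1)] hA(2) by (simp add: sum.distrib sum_subtractf sum_ind)
    also have "\<dots> = a" unfolding a_def using cardA[OF hA(1)] cardAX[OF hA(1) X(1)]
      by (simp add: algebra_simps)
    finally show ?thesis .
  qed
  have Wb: "(\<Sum>v\<in>B. w x v) = b" if hB: "x \<in> V" "B \<in> P2" "x \<notin> B" for x B
  proof -
    obtain X where X: "X \<in> P1" "x \<in> X" using inP1 hB by blast
    have "w x v = (if v \<in> X then p1 else 0)" if "v \<in> B" for v
    proof -
      have "\<not> same_comm P2 x v" using \<open>v \<in> B\<close> \<open>x \<notin> B\<close> \<open>B \<in> P2\<close> part_uniq[OF assms(4)]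
        unfolding same_comm_def by metis
      moreover have "same_comm P1 x v \<longleftrightarrow> v \<in> X" using same_comm_iff[OF assms(3) X] .
      moreover have "v \<noteq> x" using \<open>v \<in> B\<close> \<open>x \<notin> B\<close> by blast
      ultimately show ?thesis unfolding w_def edge_prob2_def by auto
    qed
    then have "(\<Sum>v\<in>B. w x v) = (\<Sum>v\<in>B. if v \<in> X then p1 else 0)"
      by (intro sum.cong) auto
    also have "\<dots> = b" unfolding b_def using sum_ind[OF finP2[OF hB(2)]] cardAX[OF hB(2) X(1)]
      by simp
    finally show ?thesis .
  qed
  have finP2s: "finite P2" by (rule card_ge_0_finite) (use assms(6,11) in simp)
  have WD: "(\<Sum>v\<in>V. w x v) = D" if hx: "x \<in> V" for x
  proof -
    obtain A where A: "A \<in> P2" "x \<in> A" using inP2 hx by blast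
    have "(\<Sum>v\<in>V. w x v) = (\<Sum>C\<in>P2. \<Sum>v\<in>C. w x v)"
      using sum.Union_disjoint[of P2 "w x"] finP2 disjointD[OF partition_onD2[OF assms(4)]]
        partition_onD1[OF assms(4)] by simp
    also have "\<dots> = (\<Sum>v\<in>A. w x v) + (\<Sum>C\<in>P2 - {A}. \<Sum>v\<in>C. w x v)"
      using sum.remove[OF finP2s A(1)] by simp
    also have "(\<Sum>C\<in>P2 - {A}. \<Sum>v\<in>C. w x v) = (\<Sum>C\<in>P2 - {A}. b)"
    proof (rule sum.cong)
      fix C assume "C \<in> P2 - {A}"
      then have "x \<notin> C" using part_uniq[OF assms(4) A(1)] A(2) by blast
      then show "(\<Sum>v\<in>C. w x v) = b" using Wb hx \<open>C \<in> P2 - {A}\<close> by blast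
    qed simp
    finally have "(\<Sum>v\<in>V. w x v) = a + real (card (P2 - {A})) * b" using Wa[OF A] by simp
    moreover have "card (P2 - {A}) = n2 - 1" using A(1) finP2s assms(6) by simp
    ultimately show ?thesis using Wa[OF A] assms(11) unfolding D_def by (simp add: of_nat_diff)
  qed

  have P2ne: "P2 \<noteq> {}" using assms(6,11) by auto
  have spos: "s \<ge> 8"
  proof -
    have "real n \<ge> 2 * real n1 * real n2" using assms(16) by (metis of_nat_le_iff of_nat_mult of_nat_numeral)
    then have "real n / real n2 \<ge> 2 * real n1" using n2pos by (simp add: field_simps)
    then show ?thesis unfolding s_def using assms(10) by linarith
  qed
  have wnn: "w u v \<ge> 0" for u v
  proof -
    have "(1 - (if same_comm P1 u v then p1 else 0)) * (1 - (if same_comm P2 u v then p2 else 0)) \<le> 1"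
      using assms(12-15) by (intro mult_le_one) auto
    then show ?thesis unfolding w_def edge_prob2_def by auto
  qed
  define I where "I C = (\<Sum>u\<in>C. \<Sum>v\<in>C. w u v)" for C
  have IA: "I A = s * a" if "A \<in> P2" for A
  proof -
    have "I A = (\<Sum>u\<in>A. a)" unfolding I_def using Wa that by (intro sum.cong) auto
    then show ?thesis using cardA[OF that] by simp
  qed
  have hyp: "5 * a > 2 * D"
  proof -
    obtain A where A: "A \<in> P2" using P2ne by blast
    have i: "exp_in w A = s * a / 2" using IA[OF A] unfolding exp_in_def I_def by simp
    have "exp_out w V A = (\<Sum>u\<in>A. D - a)" unfolding exp_out_def
    proof (rule sum.cong)
      fix u assume u: "u \<in> A"
      have "(\<Sum>v\<in>V. w u v) = (\<Sum>v\<in>V - A. w u v) + (\<Sum>v\<in>A. w u v)"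
        using sum.subset_diff[OF subP2[OF A] assms(1)] by simp
      then show "(\<Sum>v\<in>V - A. w u v) = D - a" using WD[of u] Wa[OF A u] subP2[OF A] u by auto
    qed simp
    then have o: "exp_out w V A = s * (D - a)" using cardA[OF A] by simp
    have "3 * exp_in w A > exp_out w V A" using assms(17) A unfolding w_def by blast
    then have "s * (3 * a / 2) > s * (D - a)" unfolding i o by (simp add: algebra_simps)
    then have "3 * a / 2 > D - a" using spos by (simp add: mult_less_cancel_left_pos)
    then show ?thesis by linarith
  qed
  have bnn: "b \<ge> 0" unfolding b_def t_def using assms(12) by simp
  have "(real n2 - 1) * b \<ge> 3 * b" using assms(11) bnn by (intro mult_right_mono) auto
  note h3 = this
  define X where "X = (real n2 - 1) * b"
  have DX: "D = a + X" unfolding D_def X_def ..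
  note h3 = h3[folded X_def] hyp[unfolded DX]
  have ab: "a > b" using h3 bnn DX by (smt (verit))
  have apos: "a > 0" using h3 bnn DX by (smt (verit))
  have Dpos: "D > 0" using h3 bnn DX by (smt (verit))
  define E where "E = exp_edges w V"
  have Eeq: "E = real n * D / 2" unfolding E_def using exp_edges_eq[of V w D] WD assms(2) by simp
  have npos: "real n > 0" using spos n2pos unfolding s_def by (simp add: field_simps)
  have Epos: "E > 0" unfolding Eeq using npos Dpos by simp
  define g where "g C = exp_in w C / E - (exp_deg w V C / (2 * E))^2" for C
  have modg: "modularity w V P = sum g P" for P unfolding modularity_def g_def E_def ..
  have gform: "g C = (I C / 2) / E - (real (card C) * D / (2 * E))^2" if "C \<subseteq> V" for C
    unfolding g_def exp_in_def I_def using exp_deg_eq[OF assms(1) that WD] by simp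
  have Iminus: "I (A - {x}) = s * a - 2 * a" if "A \<in> P2" "x \<in> A" for A x
  proof -
    have "I A = I (A - {x}) + 2 * (\<Sum>v\<in>A - {x}. w x v)"
    proof -
      have "insert x (A - {x}) = A" using that(2) by blast
      then show ?thesis unfolding I_def using I_insert[of "A - {x}" x w, OF _ _ wxx wsym] finP2[OF that(1)]
        by simp
    qed
    moreover have "(\<Sum>v\<in>A - {x}. w x v) = a" using sum.remove[OF finP2[OF that(1)] that(2), of "w x"] Wa[OF that] wxx by simp
    ultimately show ?thesis using IA[OF that(1)] by simp
  qed
  have Iplus: "I (insert x B) = s * a + 2 * b" if "B \<in> P2" "x \<in> V" "x \<notin> B" for B x
    using I_insert[of B x w, OF finP2[OF that(1)] that(3) wxx wsym] Wb[OF that(2,1,3)] IA[OF that(1)]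
    unfolding I_def by simp
  have Iswap: "I (insert y (A - {x})) = s * a - 2 * a + 2 * b - 2 * w y x"
    if "A \<in> P2" "x \<in> A" "y \<in> V" "y \<notin> A" for A x y
  proof -
    have "I (insert y (A - {x})) = I (A - {x}) + 2 * (\<Sum>v\<in>A - {x}. w y v)"
      unfolding I_def using I_insert[of "A - {x}" y w, OF _ _ wxx wsym] finP2[OF that(1)] that(4) by simp
    moreover have "(\<Sum>v\<in>A - {x}. w y v) = b - w y x"
      using sum.remove[OF finP2[OF that(1)] that(2), of "w y"] Wb[OF that(3,1,4)] by simp
    ultimately show ?thesis using Iminus[OF that(1,2)] by simp
  qed
  have emp: "{} \<notin> P2" using partition_onD3[OF assms(4)] .
  have nonsing: "\<exists>z\<in>A. z \<noteq> x" if "A \<in> P2" for A x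
  proof (rule ccontr)
    assume "\<not> ?thesis"
    then have "A \<subseteq> {x}" by blast
    then have "card A \<le> 1" using card_mono[of "{x}" A] by simp
    then show False using cardA[OF that] spos by simp
  qed
  have cmin: "real (card (A - {x})) = s - 1" if "A \<in> P2" "x \<in> A" for A x
  proof -
    have "card A > 0" using finP2[OF that(1)] that(2) card_gt_0_iff by blast
    then show ?thesis using cardA[OF that(1)] that(2) finP2[OF that(1)]
      by (simp add: card_Diff_singleton of_nat_diff)
  qed
  have uniq: "C = D'" if "C \<in> P2" "D' \<in> P2" "z \<in> C" "z \<in> D'" for C D' z
    using part_uniq[OF assms(4) that] .
  from assms(18) consider
      (c1) A B x where "A \<in> P2" "B \<in> P2" "x \<in> A" "A \<noteq> B"
        "P' = ((P2 - {A, B}) \<union> {A - {x}, insert x B}) - {{}}"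
    | (c2) A B x y where "A \<in> P2" "B \<in> P2" "x \<in> A" "y \<in> B" "A \<noteq> B"
        "P' = (P2 - {A, B}) \<union> {insert y (A - {x}), insert x (B - {y})}"
    | (c3) A x where "A \<in> P2" "x \<in> A" "P' = ((P2 - {A}) \<union> {A - {x}, {x}}) - {{}}"
    unfolding close_partition_def
    apply (elim disjE bexE conjE)
      apply (rule that(1); assumption)
     apply (rule that(2); assumption)
    apply (rule that(3); assumption)
    done
  then show ?thesis
  proof cases
    case c1
    define R where "R = P2 - {A, B}"
    have xV: "x \<in> V" using c1 subP2 by blast
    have xB: "x \<notin> B" using c1 uniq by blast
    obtain z where z: "z \<in> A" "z \<noteq> x" using nonsing[OF c1(1)] by blast
    have nA: "A - {x} \<noteq> {}" using z by blast
    have P'eq: "P' = insert (A - {x}) (insert (insert x B) R)"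
      unfolding c1(5) R_def using nA emp by auto
    have n1: "A - {x} \<notin> insert (insert x B) R"
    proof
      assume "A - {x} \<in> insert (insert x B) R"
      moreover have "A - {x} \<noteq> insert x B" by blast
      ultimately have "A - {x} \<in> R" by blast
      then show False using z uniq[of A "A - {x}" z] c1(1) unfolding R_def by blast
    qed
    have n2: "insert x B \<notin> R"
    proof
      assume "insert x B \<in> R"
      then show False using uniq[of A "insert x B" x] c1(1,3) unfolding R_def by blast
    qed
    have finR: "finite R" using finP2s unfolding R_def by simp
    have sP': "sum g P' = g (A - {x}) + (g (insert x B) + sum g R)"
      unfolding P'eq using finR n1 n2 by simp
    have P2eq: "P2 = insert A (insert B R)" unfolding R_def using c1 by auto
    have sP2: "sum g P2 = g A + (g B + sum g R)"
      using finR c1(4) by (subst P2eq, simp add: R_def)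
    have cm: "real (card (A - {x})) = s - 1" using cmin[OF c1(1,3)] .
    have cp: "real (card (insert x B)) = s + 1" using cardA[OF c1(2)] xB finP2[OF c1(2)] by simp
    have gm: "g (A - {x}) = ((s*a-2*a)/2)/E - ((s-1)*(D/(2*E)))^2"
      using gform[of "A - {x}"] subP2[OF c1(1)] Iminus[OF c1(1,3)] cm by auto
    have gp: "g (insert x B) = ((s*a+2*b)/2)/E - ((s+1)*(D/(2*E)))^2"
      using gform[of "insert x B"] subP2[OF c1(2)] xV Iplus[OF c1(2) xV xB] cp by auto
    have gA: "g A = ((s*a)/2)/E - (s*(D/(2*E)))^2"
      using gform[of A] subP2[OF c1(1)] IA[OF c1(1)] cardA[OF c1(1)] by auto
    have gB: "g B = ((s*a)/2)/E - (s*(D/(2*E)))^2"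
      using gform[of B] subP2[OF c1(2)] IA[OF c1(2)] cardA[OF c1(2)] by auto
    have "g (A - {x}) + g (insert x B) < g A + g B"
      unfolding gm gp gA gB using arith1[OF Epos ab, of s "D/(2*E)"] by linarith
    then show ?thesis unfolding w_def[symmetric] modg sP' sP2 by linarith
  next
    case c2
    define R where "R = P2 - {A, B}"
    define C1 where "C1 = insert y (A - {x})"
    define C2 where "C2 = insert x (B - {y})"
    have xV: "x \<in> V" and yV: "y \<in> V" using c2 subP2 by blast+
    have xB: "x \<notin> B" using c2 uniq by blast
    have yA: "y \<notin> A" using c2 uniq by blast
    have P'eq: "P' = insert C1 (insert C2 R)"
      unfolding c2(6) R_def C1_def C2_def by auto
    have n1: "C1 \<notin> insert C2 R"
    proof
      assume "C1 \<in> insert C2 R"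
      moreover have "x \<noteq> y" using xB c2(4) by blast
      then have "x \<notin> C1" "x \<in> C2" unfolding C1_def C2_def by auto
      then have "C1 \<noteq> C2" by blast
      ultimately have "C1 \<in> R" by blast
      then show False using uniq[of B C1 y] c2(2,4) unfolding R_def C1_def by blast
    qed
    have n2: "C2 \<notin> R"
    proof
      assume "C2 \<in> R"
      then show False using uniq[of A C2 x] c2(1,3) unfolding R_def C2_def by blast
    qed
    have finR: "finite R" using finP2s unfolding R_def by simp
    have sP': "sum g P' = g C1 + (g C2 + sum g R)"
      unfolding P'eq using finR n1 n2 by simp
    have P2eq: "P2 = insert A (insert B R)" unfolding R_def using c2 by auto
    have sP2: "sum g P2 = g A + (g B + sum g R)"
      using finR c2(5) by (subst P2eq, simp add: R_def)
    have c1c: "real (card C1) = s" unfolding C1_def using cmin[OF c2(1,3)] yA finP2[OF c2(1)] by simp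
    have c2c: "real (card C2) = s" unfolding C2_def using cmin[OF c2(2,4)] xB finP2[OF c2(2)] by simp
    have g1: "g C1 = ((s*a-2*a+2*b-2*w y x)/2)/E - (s*(D/(2*E)))^2"
      using gform[of C1] subP2[OF c2(1)] yV Iswap[OF c2(1,3) yV yA] c1c unfolding C1_def by auto
    have g2: "g C2 = ((s*a-2*a+2*b-2*w x y)/2)/E - (s*(D/(2*E)))^2"
      using gform[of C2] subP2[OF c2(2)] xV Iswap[OF c2(2,4) xV xB] c2c unfolding C2_def by auto
    have gA: "g A = ((s*a)/2)/E - (s*(D/(2*E)))^2"
      using gform[of A] subP2[OF c2(1)] IA[OF c2(1)] cardA[OF c2(1)] by auto
    have gB: "g B = ((s*a)/2)/E - (s*(D/(2*E)))^2"
      using gform[of B] subP2[OF c2(2)] IA[OF c2(2)] cardA[OF c2(2)] by auto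
    have "g C1 + g C2 < g A + g B"
      unfolding g1 g2 gA gB using arith2[OF Epos ab wnn[of y x] wnn[of x y], of s "D/(2*E)"] by linarith
    then show ?thesis unfolding w_def[symmetric] modg sP' sP2 by linarith

  next
    case c3
    define R where "R = P2 - {A}"
    have xV: "x \<in> V" using c3 subP2 by blast
    obtain z where z: "z \<in> A" "z \<noteq> x" using nonsing[OF c3(1)] by blast
    have nA: "A - {x} \<noteq> {}" using z by blast
    have P'eq: "P' = insert (A - {x}) (insert {x} R)"
      unfolding c3(3) R_def using nA emp by auto
    have n1: "A - {x} \<notin> insert {x} R"
    proof
      assume "A - {x} \<in> insert {x} R"
      moreover have "A - {x} \<noteq> {x}" by blast
      ultimately have "A - {x} \<in> R" by blast
      then show False using z uniq[of A "A - {x}" z] c3(1) unfolding R_def by blast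
    qed
    have n2: "{x} \<notin> R"
    proof
      assume "{x} \<in> R"
      then show False using uniq[of A "{x}" x] c3(1,2) z unfolding R_def by blast
    qed
    have finR: "finite R" using finP2s unfolding R_def by simp
    have sP': "sum g P' = g (A - {x}) + (g {x} + sum g R)"
      unfolding P'eq using finR n1 n2 by simp
    have sP2: "sum g P2 = g A + sum g R"
      unfolding R_def using sum.remove[OF finP2s c3(1)] .
    have gm: "g (A - {x}) = ((s*a-2*a)/2)/E - ((s-1)*(D/(2*E)))^2"
      using gform[of "A - {x}"] subP2[OF c3(1)] Iminus[OF c3(1,2)] cmin[OF c3(1,2)] by auto
    have gx: "g {x} = (0/2)/E - (1*(D/(2*E)))^2"
      using gform[of "{x}"] xV wxx unfolding I_def by auto
    have gA: "g A = ((s*a)/2)/E - (s*(D/(2*E)))^2"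
      using gform[of A] subP2[OF c3(1)] IA[OF c3(1)] cardA[OF c3(1)] by auto
    have Nge: "real n \<ge> 4 * s" unfolding s_def using assms(11) n2pos npos
      by (simp add: field_simps)
    have "g (A - {x}) + g {x} < g A"
      unfolding gm gx gA using arith3[OF Dpos hyp Nge _ Eeq] spos by linarith
    then show ?thesis unfolding w_def[symmetric] modg sP' sP2 by linarith

  qed
qed

end
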